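(* Let $\mathfrak L=(L_0,\dots,L_k)$ be a chain of Lagrangian submanifolds of a symplectic manifold $M$ with base point $y$, let $\vec p=(p_{0k},p_{k(k-1)},\dots,p_{10})$ with $p_{(i+1)i}\in L_i\cap L_{i+1}$ (indices mod $k+1$), and let $B\in\pi_2(\mathfrak L;\vec p)$. Then there exist anchors $\gamma_i$ of $L_i$, $i=0,\dots,k$, such that $B$ is admissible with respect to $\mathcal E=((L_0,\gamma_0),\dots,(L_k,\gamma_k))$.
   Context: An anchor of $L$: a path $\gamma$ with $\gamma(0)=y$, $\gamma(1)\in L$. For $i\ne j$, $\ell_{ij}(t)=\gamma_i(1-2t)$ ($t\le1/2$), $\gamma_j(2t-1)$ ($t\ge1/2$). $\pi_2(\mathfrak L;\vec p)$: homotopy classes of maps $v:D^2\to M$ with boundary points $z_{0k},z_{k(k-1)},\dots,z_{10}$ in counterclockwise order such that $v(z_{j(j-1)})=p_{j(j-1)}$ and $v$ maps the counterclockwise boundary arc from $z_{(j+1)j}$ to $z_{j(j-1)}$ into $L_j$. $B$ is admissible with respect to $\mathcal E$ if there exist strips $w^-_{i(i+1)}:[0,1]^2\to M$ ($i=0,\dots,k$) with $w^-_{i(i+1)}(s,0)\in L_i$, $w^-_{i(i+1)}(s,1)\in L_{i+1}$, $w^-_{i(i+1)}(0,t)=p_{(i+1)i}$, $w^-_{i(i+1)}(1,t)=\ell_{i(i+1)}(t)$, such that $B$ is the homotopy class of the disc map obtained by identifying the point $(1,t)$, $t\in[1/2,1]$, of strip $i$ with the point $(1,1-t)$ of strip $i+1$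 and collapsing each edge $\{0\}\times[0,1]$ to a point. *)

theory Defs
  imports "HOL-Analysis.Analysis"
begin

text \<open>The chain is L 0, ..., L k (n = Suc k Lagrangians, indices mod n).
  p i stands for p_{(i+1)i} (an element of L i \<inter> L ((i+1) mod n)).
  The disc D^2 is cball (0::complex) 1; the marked boundary point z_{(i+1)i}
  is cis(-2 pi i / n), so that z_{0k}, z_{k(k-1)}, ..., z_{10} appear in
  counterclockwise order, and the counterclockwise arc from z_{(j+1)j}
  to z_{j(j-1)} is {cis(-2 pi j/n + th) | 0 \<le> th \<le> 2 pi/n}.\<close>

definition corner_pt :: "nat \<Rightarrow> nat \<Rightarrow> complex" where
  "corner_pt k i = cis (- 2 * pi * real i / real (Suc k))"

definition disc_bc :: "(nat \<Rightarrow> 'a set) \<Rightarrow> nat \<Rightarrow> (nat \<Rightarrow> 'a) \<Rightarrow> (complex \<Rightarrow> 'a) \<Rightarrow> bool" where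
  "disc_bc L k p v \<longleftrightarrow>
     (\<forall>i\<le>k. v (corner_pt k i) = p i \<and>
        (\<forall>th \<in> {0 .. 2 * pi / real (Suc k)}.
            v (cis (- 2 * pi * real i / real (Suc k) + th)) \<in> L i))"

definition pi2 :: "'a::topological_space set \<Rightarrow> (nat \<Rightarrow> 'a set) \<Rightarrow> nat \<Rightarrow> (nat \<Rightarrow> 'a)
                    \<Rightarrow> (complex \<Rightarrow> 'a) set set" where
  "pi2 M L k p = {B. \<exists>v0. continuous_on (cball 0 1) v0 \<and> v0 ` cball 0 1 \<subseteq> M \<and> disc_bc L k p v0 \<and>
        B = {v. homotopic_with_canon (disc_bc L k p) (cball 0 1) M v0 v}}"

definition anchor :: "'a::topological_space set \<Rightarrow> 'a \<Rightarrow> 'a set \<Rightarrow> (real \<Rightarrow> 'a) \<Rightarrow> bool" where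
  "anchor M y L g \<longleftrightarrow> path g \<and> path_image g \<subseteq> M \<and> pathstart g = y \<and> pathfinish g \<in> L"

definition ell :: "(real \<Rightarrow> 'a) \<Rightarrow> (real \<Rightarrow> 'a) \<Rightarrow> real \<Rightarrow> 'a" where
  "ell gi gj t = (if t \<le> 1/2 then gi (1 - 2 * t) else gj (2 * t - 1))"

definition strip_ok :: "'a::topological_space set \<Rightarrow> (nat \<Rightarrow> 'a set) \<Rightarrow> nat \<Rightarrow> (nat \<Rightarrow> 'a)
      \<Rightarrow> (nat \<Rightarrow> real \<Rightarrow> 'a) \<Rightarrow> nat \<Rightarrow> (real \<times> real \<Rightarrow> 'a) \<Rightarrow> bool" where
  "strip_ok M L k p \<gamma> i w \<longleftrightarrow>
     continuous_on ({0..1} \<times> {0..1}) w \<and> w ` ({0..1} \<times> {0..1}) \<subseteq> M \<and>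
     (\<forall>s\<in>{0..1}. w (s, 0) \<in> L i \<and> w (s, 1) \<in> L (Suc i mod Suc k)) \<and>
     (\<forall>t\<in>{0..1}. w (0, t) = p i \<and> w (1, t) = ell (\<gamma> i) (\<gamma> (Suc i mod Suc k)) t)"

text \<open>Strip i is placed on the sector of D^2 of
  angles -2 pi i/n + u pi/n, u \<in> [-1,1], radius r \<in> [0,1]; the point with polar
  data (r,u) corresponds to the point (glue_s r u, glue_t r u) of the square.
  This sends the edge {0}\<times>[0,1] to the boundary point z_{(i+1)i} (collapse),
  the edge {1}\<times>[0,1/2] to the radius towards angle -2 pi (i - 1/2)/n and
  {1}\<times>[1/2,1] to the radius towards angle -2 pi (i + 1/2)/n, realising
  the identification of (1,t), t \<in> [1/2,1], in strip i with (1,1-t) in strip i+1.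
  It is a homeomorphism from the square with the left edge collapsed onto the sector.\<close>
definition glue_s :: "real \<Rightarrow> real \<Rightarrow> real" where
  "glue_s r u = max \<bar>u\<bar> (1 - r)"

definition glue_t :: "real \<Rightarrow> real \<Rightarrow> real" where
  "glue_t r u = 1/2 - u * r / (2 * glue_s r u)"

definition glued :: "nat \<Rightarrow> (nat \<Rightarrow> real \<times> real \<Rightarrow> 'a) \<Rightarrow> (complex \<Rightarrow> 'a) \<Rightarrow> bool" where
  "glued k w g \<longleftrightarrow>
     (\<forall>i\<le>k. \<forall>r\<in>{0..1}. \<forall>u\<in>{-1..1}.
        g (complex_of_real r * cis (- 2 * pi * real i / real (Suc k) + u * pi / real (Suc k)))
          = w i (glue_s r u, glue_t r u))"

definition admissible :: "'a::topological_space set \<Rightarrow> (nat \<Rightarrow> 'a set) \<Rightarrow> nat \<Rightarrow> (nat \<Rightarrow> 'a)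
      \<Rightarrow> (nat \<Rightarrow> real \<Rightarrow> 'a) \<Rightarrow> (complex \<Rightarrow> 'a) set \<Rightarrow> bool" where
  "admissible M L k p \<gamma> B \<longleftrightarrow>
     (\<exists>w g. (\<forall>i\<le>k. strip_ok M L k p \<gamma> i (w i)) \<and> glued k w g \<and> g \<in> B)"

end

theory Submission
  imports Defs
begin

lemma hom_canon_intro:
  fixes h :: "real \<times> 'a::topological_space \<Rightarrow> 'b::topological_space"
  assumes "continuous_on ({0..1} \<times> X) h" "h ` ({0..1} \<times> X) \<subseteq> Y"
    "\<And>x. h(0,x) = f x" "\<And>x. h(1,x) = g x" "\<And>t. t\<in>{0..1} \<Longrightarrow> P (\<lambda>x. h(t,x))"
  shows "homotopic_with_canon P X Y f g"
  unfolding homotopic_with_def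
  apply (rule exI[of _ h])
  using assms by (auto simp: image_subset_iff_funcset)

definition mfac :: "real \<Rightarrow> real" where "mfac r = max 0 (2*r-1) / max r (1/2)"
definition cmap :: "complex \<Rightarrow> complex" where "cmap z = complex_of_real (mfac (cmod z)) * z"

lemma mfac_ge0: "0 \<le> mfac r" by (simp add: mfac_def)
lemma mfac_le1: "r \<le> 1 \<Longrightarrow> mfac r \<le> 1" by (auto simp: mfac_def divide_simps max_def)
lemma mfac_1: "mfac 1 = 1" by (simp add: mfac_def)
lemma mfac_small: "r \<le> 1/2 \<Longrightarrow> mfac r = 0" by (simp add: mfac_def)
lemma cont_mfac: "continuous_on S mfac"
  unfolding mfac_def by (intro continuous_intros) (auto simp: max_def)
lemma cont_cmap: "continuous_on S cmap"
  unfolding cmap_def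
  by (intro continuous_intros continuous_on_compose2[OF cont_mfac[of UNIV]]) auto
lemma cmap_norm: "cmod z \<le> 1 \<Longrightarrow> cmod (cmap z) \<le> cmod z"
  unfolding cmap_def norm_mult using mfac_ge0 mfac_le1
  by (simp add: mult_left_le_one_le)
lemma cmap_norm1: "cmod z \<le> 1 \<Longrightarrow> cmod (cmap z) \<le> 1"
  using cmap_norm by fastforce
lemma cmap_1: "cmod z = 1 \<Longrightarrow> cmap z = z" by (simp add: cmap_def mfac_1)
lemma cmap_small: "cmod z \<le> 1/2 \<Longrightarrow> cmap z = 0" by (simp add: cmap_def mfac_small)

lemma disc_bc_cong:
  assumes "\<And>z. cmod z = 1 \<Longrightarrow> f z = v z" "disc_bc L k p v"
  shows "disc_bc L k p f"
  using assms unfolding disc_bc_def corner_pt_def by simp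

definition gmap :: "(real \<Rightarrow> 'a) \<Rightarrow> (complex \<Rightarrow> 'a) \<Rightarrow> complex \<Rightarrow> 'a" where
  "gmap q v z = (if cmod z \<le> 1/2 then q (1 - 2 * cmod z) else v (cmap z))"

lemma gmap_cont:
  assumes "path q" "continuous_on (cball 0 1) v" "q 0 = v 0"
  shows "continuous_on (cball 0 1) (gmap q v)"
  unfolding gmap_def
proof (rule continuous_on_cases_le)
  show "continuous_on {x \<in> cball 0 1. cmod x \<le> 1 / 2} (\<lambda>x. q (1 - 2 * cmod x))"
    by (rule continuous_on_compose2[OF assms(1)[unfolded path_def]]) (auto intro!: continuous_intros)
  show "continuous_on {x \<in> cball 0 1. 1 / 2 \<le> cmod x} (\<lambda>x. v (cmap x))"
    by (rule continuous_on_compose2[OF assms(2) cont_cmap]) (auto dest: cmap_norm1)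
  show "continuous_on (cball 0 1) cmod" by (intro continuous_intros)
  show "q (1 - 2 * cmod x) = v (cmap x)" if "x \<in> cball 0 1" "cmod x = 1 / 2" for x
  proof -
    have e: "1 - 2 * cmod x = 0" using that by simp
    show ?thesis unfolding e using assms(3) that by (simp add: cmap_small)
  qed
qed

lemma gmap_in:
  assumes "path_image q \<subseteq> M" "v ` cball 0 1 \<subseteq> M" "cmod z \<le> 1"
  shows "gmap q v z \<in> M"
proof (cases "cmod z \<le> 1/2")
  case True
  then have "1 - 2 * cmod z \<in> {0..1}" by auto
  then show ?thesis using assms True by (auto simp: gmap_def path_image_def)
next
  case False
  then show ?thesis using assms cmap_norm[of z] by (auto simp: gmap_def)
qed

lemma gmap_1: "cmod z = 1 \<Longrightarrow> gmap q v z = v z"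
  by (simp add: gmap_def cmap_1)

lemma gmap_0: "gmap q v 0 = q 1"
  by (simp add: gmap_def)

lemma hom1:
  assumes "continuous_on (cball 0 1) v" "v ` cball 0 1 \<subseteq> M" "disc_bc L k p v"
  shows "homotopic_with_canon (disc_bc L k p) (cball 0 1) M v (v \<circ> cmap)"
proof (rule hom_canon_intro[where h = "\<lambda>(l,z). v (complex_of_real ((1-l) + l * mfac (cmod z)) * z)"])
  have sc: "cmod (complex_of_real ((1-l) + l * mfac (cmod z)) * z) \<le> 1"
    if "l \<in> {0..1}" "cmod z \<le> 1" for l z
  proof -
    have m: "0 \<le> mfac (cmod z)" "mfac (cmod z) \<le> 1" using mfac_ge0 mfac_le1 that by auto
    have a: "0 \<le> (1-l) + l * mfac (cmod z)" using m that by auto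
    have b: "(1-l) + l * mfac (cmod z) \<le> 1" using m that
      by (simp add: mult_left_le)
    have "cmod (complex_of_real ((1-l) + l * mfac (cmod z)) * z) = ((1-l) + l * mfac (cmod z)) * cmod z"
      by (simp only: norm_mult norm_of_real abs_of_nonneg[OF a])
    then show ?thesis using a b that
      by (simp add: mult_le_one)
  qed
  show "continuous_on ({0..1} \<times> cball 0 1) (\<lambda>(l,z). v (complex_of_real ((1-l) + l * mfac (cmod z)) * z))"
    unfolding case_prod_unfold
  proof (rule continuous_on_compose2[OF assms(1)])
    show "(\<lambda>x. complex_of_real ((1 - fst x) + fst x * mfac (cmod (snd x))) * snd x) ` ({0..1} \<times> cball 0 1) \<subseteq> cball 0 1"
      using sc by force
  qed (auto intro!: continuous_intros continuous_on_compose2[OF cont_mfac[of UNIV]])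
  show "(\<lambda>(l,z). v (complex_of_real ((1-l) + l * mfac (cmod z)) * z)) ` ({0..1} \<times> cball 0 1) \<subseteq> M"
    using assms(2) sc by fastforce
  show "\<And>x. (\<lambda>(l,z). v (complex_of_real ((1-l) + l * mfac (cmod z)) * z)) (0, x) = v x" by simp
  show "\<And>x. (\<lambda>(l,z). v (complex_of_real ((1-l) + l * mfac (cmod z)) * z)) (1, x) = (v \<circ> cmap) x"
    by (simp add: cmap_def)
  show "\<And>t. t \<in> {0..1} \<Longrightarrow> disc_bc L k p (\<lambda>x. (\<lambda>(l,z). v (complex_of_real ((1-l) + l * mfac (cmod z)) * z)) (t, x))"
    by (rule disc_bc_cong[OF _ assms(3)]) (simp add: mfac_1)
qed

lemma hom2:
  assumes "continuous_on (cball 0 1) v" "v ` cball 0 1 \<subseteq> M" "disc_bc L k p v"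
    "path q" "path_image q \<subseteq> M" "q 0 = v 0"
  shows "homotopic_with_canon (disc_bc L k p) (cball 0 1) M (v \<circ> cmap) (gmap q v)"
proof (rule hom_canon_intro[where h = "\<lambda>lz. if cmod (snd lz) \<le> 1/2 then q (fst lz * (1 - 2 * cmod (snd lz))) else v (cmap (snd lz))"])
  show "continuous_on ({0..1} \<times> cball 0 1) (\<lambda>lz. if cmod (snd lz) \<le> 1/2 then q (fst lz * (1 - 2 * cmod (snd lz))) else v (cmap (snd lz)))"
  proof (rule continuous_on_cases_le)
    show "continuous_on {x \<in> {0..1} \<times> cball 0 1. cmod (snd x) \<le> 1 / 2} (\<lambda>x. q (fst x * (1 - 2 * cmod (snd x))))"
      by (rule continuous_on_compose2[OF assms(4)[unfolded path_def]])
         (auto intro!: continuous_intros simp: mult_le_one)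
    show "continuous_on {x \<in> {0..1} \<times> cball 0 1. 1 / 2 \<le> cmod (snd x)} (\<lambda>x. v (cmap (snd x)))"
      by (rule continuous_on_compose2[OF assms(1) continuous_on_compose2[OF cont_cmap[of UNIV]]])
         (auto intro!: continuous_intros dest: cmap_norm1)
    show "continuous_on ({0..1} \<times> cball 0 1) (\<lambda>x. cmod (snd x))" by (intro continuous_intros)
    show "q (fst x * (1 - 2 * cmod (snd x))) = v (cmap (snd x))"
      if "x \<in> {0..1} \<times> cball 0 1" "cmod (snd x) = 1 / 2" for x
    proof -
      have e: "fst x * (1 - 2 * cmod (snd x)) = 0" using that by simp
      show ?thesis unfolding e using assms(6) that by (simp add: cmap_small)
    qed
  qed
  show "(\<lambda>lz. if cmod (snd lz) \<le> 1/2 then q (fst lz * (1 - 2 * cmod (snd lz))) else v (cmap (snd lz))) ` ({0..1} \<times> cball 0 1) \<subseteq> M"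
  proof (rule image_subsetI)
    fix x :: "real \<times> complex" assume x: "x \<in> {0..1} \<times> cball 0 1"
    obtain l z where lz0: "x = (l,z)" by force
    have lz: "(l, z) \<in> {0..1} \<times> cball 0 1" using x lz0 by simp
    show "(if cmod (snd x) \<le> 1/2 then q (fst x * (1 - 2 * cmod (snd x))) else v (cmap (snd x))) \<in> M"
    proof (cases "cmod z \<le> 1/2")
      case True
      then have "l * (1 - 2 * cmod z) \<in> {0..1}" using lz by (auto simp: mult_le_one)
      then show ?thesis using True assms(5) lz0 by (auto simp: path_image_def)
    next
      case False
      then show ?thesis using lz assms(2) cmap_norm1[of z] lz0 by auto
    qed
  qed
  show "\<And>x. (\<lambda>lz. if cmod (snd lz) \<le> 1/2 then q (fst lz * (1 - 2 * cmod (snd lz))) else v (cmap (snd lz))) (0, x) = (v \<circ> cmap) x"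
    using assms(6) by (simp add: cmap_small)
  show "\<And>x. (\<lambda>lz. if cmod (snd lz) \<le> 1/2 then q (fst lz * (1 - 2 * cmod (snd lz))) else v (cmap (snd lz))) (1, x) = gmap q v x"
    by (simp add: gmap_def)
  show "\<And>t. t \<in> {0..1} \<Longrightarrow> disc_bc L k p (\<lambda>x. (\<lambda>lz. if cmod (snd lz) \<le> 1/2 then q (fst lz * (1 - 2 * cmod (snd lz))) else v (cmap (snd lz))) (t, x))"
    by (rule disc_bc_cong[OF _ assms(3)]) (simp add: cmap_1)
qed

definition Rf :: "real \<Rightarrow> real \<Rightarrow> real" where "Rf s t = max (1 - s) \<bar>1 - 2*t\<bar>"

lemma glue_a: assumes "\<bar>u\<bar> \<le> 1" "0 \<le> r" "r \<le> 1"
  shows "1 - 2 * glue_t r u = u * r / glue_s r u"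
  unfolding glue_t_def by (simp add: field_simps)

lemma glue_a2: assumes "\<bar>u\<bar> \<le> 1" "0 \<le> r" "r \<le> 1"
  shows "(1 - 2 * glue_t r u) * glue_s r u = u * r"
proof (cases "glue_s r u = 0")
  case True
  then have "u = 0" unfolding glue_s_def by (simp add: max_def split: if_splits)
  then show ?thesis by (simp add: glue_t_def)
next
  case False
  then show ?thesis using glue_a[OF assms] by simp
qed

lemma glue_R: assumes "\<bar>u\<bar> \<le> 1" "0 \<le> r" "r \<le> 1"
  shows "Rf (glue_s r u) (glue_t r u) = r"
proof (cases "\<bar>u\<bar> \<ge> 1 - r")
  case True
  then have s: "glue_s r u = \<bar>u\<bar>" unfolding glue_s_def by simp
  show ?thesis
  proof (cases "u = 0")
    case True then show ?thesis using s \<open>\<bar>u\<bar> \<ge> 1 - r\<close> assms by (simp add: Rf_def glue_t_def)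
  next
    case False
    have "\<bar>1 - 2 * glue_t r u\<bar> = r" unfolding glue_a[OF assms] s using False assms
      by (simp add: abs_mult)
    then show ?thesis using True s by (simp add: Rf_def)
  qed
next
  case False
  then have s: "glue_s r u = 1 - r" unfolding glue_s_def by simp
  have "\<bar>1 - 2 * glue_t r u\<bar> = \<bar>u\<bar> * r / (1 - r)" unfolding glue_a[OF assms] s using False assms
      by (simp add: abs_mult)
  also have "\<dots> \<le> r"
  proof (cases "r = 1")
    case False
    have "\<bar>u\<bar> * r \<le> (1 - r) * r" using \<open>\<not> \<bar>u\<bar> \<ge> 1 - r\<close> assms by (intro mult_right_mono) auto
    then show ?thesis using False assms by (simp add: divide_simps mult.commute)
  qed simp
  finally show ?thesis using s by (simp add: Rf_def)
qed

definition bt :: "nat \<Rightarrow> nat \<Rightarrow> real" where "bt k i = - 2 * pi * real i / real (Suc k)"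

definition Zf :: "nat \<Rightarrow> nat \<Rightarrow> real \<Rightarrow> real \<Rightarrow> complex" where
  "Zf k i s t = complex_of_real (Rf s t) * cis (bt k i + (1 - 2*t) * s / Rf s t * pi / real (Suc k))"

lemma Rf_ge0: "0 \<le> Rf s t" by (simp add: Rf_def)
lemma Rf_le1: "s \<in> {0..1} \<Longrightarrow> t \<in> {0..1} \<Longrightarrow> Rf s t \<le> 1" by (auto simp: Rf_def)
lemma norm_Zf: "cmod (Zf k i s t) = Rf s t"
  by (simp add: Zf_def norm_mult Rf_ge0)

lemma glue_Z: assumes "\<bar>u\<bar> \<le> 1" "0 \<le> r" "r \<le> 1"
  shows "Zf k i (glue_s r u) (glue_t r u) = complex_of_real r * cis (bt k i + u * pi / real (Suc k))"
proof (cases "r = 0")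
  case True then show ?thesis unfolding Zf_def glue_R[OF assms] by simp
next
  case False
  have "(1 - 2 * glue_t r u) * glue_s r u / Rf (glue_s r u) (glue_t r u) = u"
    unfolding glue_R[OF assms] glue_a2[OF assms] using False by simp
  then show ?thesis unfolding Zf_def glue_R[OF assms] by (simp add: mult.assoc)
qed

lemma Zf_t0: "s \<in> {0..1} \<Longrightarrow> Zf k i s 0 = cis (bt k i + s * pi / real (Suc k))"
  by (simp add: Zf_def Rf_def)
lemma Zf_t1: "s \<in> {0..1} \<Longrightarrow> Zf k i s 1 = cis (bt k i - s * pi / real (Suc k))"
  by (simp add: Zf_def Rf_def)
lemma Zf_s0: assumes "t \<in> {0..1}" shows "Zf k i 0 t = cis (bt k i)"
proof -
  have "\<bar>1 - 2*t\<bar> \<le> 1" using assms by auto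
  then have "Rf 0 t = 1" by (simp add: Rf_def)
  then show ?thesis by (simp add: Zf_def)
qed
lemma Zf_s1a: "t \<in> {0..1} \<Longrightarrow> t \<le> 1/2 \<Longrightarrow> Zf k i 1 t = complex_of_real (1 - 2*t) * cis (bt k i + pi / real (Suc k))"
proof (cases "t = 1/2")
  case True
  show ?thesis unfolding True Zf_def Rf_def by simp
next
  case False
  assume "t \<in> {0..1}" "t \<le> 1/2"
  then have r: "Rf 1 t = 1 - 2*t" by (simp add: Rf_def)
  have "(1 - 2 * t) * 1 / (1 - 2*t) = 1" using False by simp
  then show ?thesis unfolding Zf_def r by simp
qed
lemma Zf_s1b: assumes "t \<in> {0..1}" "\<not> t \<le> 1/2"
  shows "Zf k i 1 t = complex_of_real (2*t - 1) * cis (bt k i - pi / real (Suc k))"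
proof -
  have r: "Rf 1 t = 2*t - 1" using assms by (simp add: Rf_def)
  have "(1 - 2 * t) * 1 / (2*t - 1) = -1" using assms by (simp add: divide_simps)
  then have "bt k i + (1 - 2 * t) * 1 / (2*t - 1) * pi / real (Suc k) = bt k i - pi / real (Suc k)"
    by simp
  then show ?thesis unfolding Zf_def r by simp
qed

lemma bt_next: assumes "i \<le> k"
  shows "cis (bt k (Suc i mod Suc k) + x) = cis (bt k i - 2 * pi / real (Suc k) + x)"
proof (cases "i < k")
  case True
  then have "Suc i mod Suc k = Suc i" by simp
  moreover have "bt k (Suc i) = bt k i - 2 * pi / real (Suc k)"
  proof -
    have "- 2 * pi * real (Suc i) = - 2 * pi * real i - 2 * pi" by (simp add: algebra_simps)
    then have "bt k (Suc i) = (- 2 * pi * real i - 2 * pi) / real (Suc k)" unfolding bt_def by simp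
    then show ?thesis by (simp add: diff_divide_distrib bt_def)
  qed
  ultimately show ?thesis by simp
next
  case False
  then have "i = k" using assms by simp
  have p: "real (Suc k) \<noteq> 0" by simp
  have "- 2 * pi * real k - 2 * pi = - 2 * pi * real (Suc k)" by (simp add: algebra_simps)
  then have "(- 2 * pi * real k - 2 * pi) / real (Suc k) = - 2 * pi" using p by simp
  then have "bt k k - 2 * pi / real (Suc k) = - 2 * pi" unfolding bt_def by (simp add: diff_divide_distrib)
  then have a: "bt k i - 2 * pi / real (Suc k) + x = x - 2 * pi" using \<open>i = k\<close> by simp
  have "cis (x - 2*pi) = cis x"
    using cis_mult[of "x - 2*pi" "2*pi"] by simp
  then show ?thesis unfolding a using \<open>i = k\<close> by (simp add: bt_def)
qed

lemma w_cont:
  assumes "path q" "continuous_on (cball 0 1) v" "q 0 = v 0"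
  shows "continuous_on ({0..1} \<times> {0..1}) (\<lambda>st. gmap q v (Zf k i (fst st) (snd st)))"
proof -
  have eq: "(\<lambda>st. gmap q v (Zf k i (fst st) (snd st))) =
     (\<lambda>st. if Rf (fst st) (snd st) \<le> 1/2 then q (1 - 2 * Rf (fst st) (snd st)) else v (cmap (Zf k i (fst st) (snd st))))"
    unfolding gmap_def norm_Zf ..
  have cR: "continuous_on S (\<lambda>st. Rf (fst st) (snd st))" for S
    unfolding Rf_def by (intro continuous_intros)
  show ?thesis unfolding eq
  proof (rule continuous_on_cases_le[OF _ _ cR])
    show "continuous_on {x \<in> {0..1} \<times> {0..1}. Rf (fst x) (snd x) \<le> 1 / 2} (\<lambda>x. q (1 - 2 * Rf (fst x) (snd x)))"
      by (rule continuous_on_compose2[OF assms(1)[unfolded path_def]]) (auto intro!: continuous_intros cR simp: Rf_ge0)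
    have cZ: "continuous_on {x \<in> {0..1} \<times> {0..1}. 1/2 \<le> Rf (fst x) (snd x)} (\<lambda>x. Zf k i (fst x) (snd x))"
      unfolding Zf_def by (intro continuous_intros cR) auto
    show "continuous_on {x \<in> {0..1} \<times> {0..1}. 1 / 2 \<le> Rf (fst x) (snd x)} (\<lambda>x. v (cmap (Zf k i (fst x) (snd x))))"
      by (rule continuous_on_compose2[OF assms(2) continuous_on_compose2[OF cont_cmap[of UNIV] cZ]])
         (auto intro!: cmap_norm1 simp: norm_Zf Rf_le1 mem_Times_iff)
    show "q (1 - 2 * Rf (fst x) (snd x)) = v (cmap (Zf k i (fst x) (snd x)))"
      if "x \<in> {0..1} \<times> {0..1}" "Rf (fst x) (snd x) = 1 / 2" for x
    proof -
      have e: "1 - 2 * Rf (fst x) (snd x) = 0" using that by simp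
      show ?thesis unfolding e using assms(3) that by (simp add: cmap_small norm_Zf)
    qed
  qed
qed

theorem mainTheorem8:
  fixes M :: "'a::topological_space set" and L :: "nat \<Rightarrow> 'a set" and y :: 'a
    and k :: nat and p :: "nat \<Rightarrow> 'a" and B :: "(complex \<Rightarrow> 'a) set"
  assumes "path_connected M" and "y \<in> M"
    and "\<forall>i\<le>k. L i \<subseteq> M"
    and "\<forall>i\<le>k. p i \<in> L i \<inter> L (Suc i mod Suc k)"
    and "B \<in> pi2 M L k p"
  shows "\<exists>\<gamma>. (\<forall>i\<le>k. anchor M y (L i) (\<gamma> i)) \<and> admissible M L k p \<gamma> B"
proof -
  obtain v0 where v0c: "continuous_on (cball 0 1) v0" and v0M: "v0 ` cball 0 1 \<subseteq> M"
    and v0bc: "disc_bc L k p v0"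
    and Bdef: "B = {v. homotopic_with_canon (disc_bc L k p) (cball 0 1) M v0 v}"
    using assms(5) unfolding pi2_def by blast
  have "v0 0 \<in> M" using v0M by auto
  then obtain q where q: "path q" "path_image q \<subseteq> M" "pathstart q = v0 0" "pathfinish q = y"
    using assms(1,2) unfolding path_connected_def by blast
  have q0: "q 0 = v0 0" using q(3) by (simp add: pathstart_def)
  have q1: "q 1 = y" using q(4) by (simp add: pathfinish_def)
  define n where "n = real (Suc k)"
  have npos: "n > 0" by (simp add: n_def)
  define g where "g = gmap q v0"
  define \<gamma> where "\<gamma> = (\<lambda>i \<tau>. g (complex_of_real \<tau> * cis (bt k i + pi / n)))"
  define w where "w = (\<lambda>i st. g (Zf k i (fst st) (snd st)))"
  have gc: "continuous_on (cball 0 1) g" unfolding g_def by (rule gmap_cont[OF q(1) v0c q0])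
  have gM: "g z \<in> M" if "cmod z \<le> 1" for z unfolding g_def by (rule gmap_in[OF q(2) v0M that])
  have g1: "g z = v0 z" if "cmod z = 1" for z unfolding g_def using that by (rule gmap_1)
  have bcL: "v0 (cis (bt k i + th)) \<in> L i" if "i \<le> k" "th \<in> {0 .. 2 * pi / n}" for i th
    using v0bc that unfolding disc_bc_def bt_def n_def by blast
  have anch: "anchor M y (L i) (\<gamma> i)" if "i \<le> k" for i
  proof -
    have "continuous_on {0..1} (\<gamma> i)" unfolding \<gamma>_def
      by (rule continuous_on_compose2[OF gc]) (auto intro!: continuous_intros simp: norm_mult)
    moreover have "path_image (\<gamma> i) \<subseteq> M" unfolding path_image_def \<gamma>_def
      by (auto intro!: gM simp: norm_mult)
    moreover have "pathstart (\<gamma> i) = y" unfolding pathstart_def \<gamma>_def g_def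
      by (simp add: gmap_0 q1)
    moreover have "pathfinish (\<gamma> i) \<in> L i" unfolding pathfinish_def \<gamma>_def
      using g1 bcL[OF that, of "pi / n"] npos by (simp add: field_simps)
    ultimately show ?thesis unfolding anchor_def path_def by blast
  qed
  have strip: "strip_ok M L k p \<gamma> i (w i)" if "i \<le> k" for i
  proof -
    define j where "j = Suc i mod Suc k"
    have jk: "j \<le> k" unfolding j_def by (metis less_Suc_eq_le mod_less_divisor zero_less_Suc)
    have c1: "continuous_on ({0..1} \<times> {0..1}) (w i)" unfolding w_def g_def
      by (rule w_cont[OF q(1) v0c q0])
    have c2: "w i ` ({0..1} \<times> {0..1}) \<subseteq> M" unfolding w_def
      by (auto intro!: gM simp: norm_Zf Rf_le1)
    have c3: "w i (s, 0) \<in> L i \<and> w i (s, 1) \<in> L j" if s: "s \<in> {0..1}" for s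
    proof
      have "w i (s,0) = v0 (cis (bt k i + s * pi / n))" unfolding w_def
        using s g1 by (simp add: Zf_t0 n_def)
      moreover have "s * pi / n \<in> {0 .. 2 * pi / n}" using s npos
        by (auto simp: divide_simps)
      ultimately show "w i (s, 0) \<in> L i" using bcL[OF \<open>i \<le> k\<close>] by simp
    next
      have "w i (s,1) = v0 (cis (bt k i - s * pi / n))" unfolding w_def
        using s g1 by (simp add: Zf_t1 n_def)
      also have "cis (bt k i - s * pi / n) = cis (bt k j + (2 - s) * pi / n)"
      proof -
        have nz: "n \<noteq> 0" using npos by simp
        have e: "bt k i - 2 * pi / n + (2 - s) * pi / n = bt k i - s * pi / n"
          using nz by (simp add: field_simps)
        show ?thesis unfolding j_def bt_next[OF \<open>i \<le> k\<close>, folded n_def] e ..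
      qed
      finally have "w i (s,1) = v0 (cis (bt k j + (2 - s) * pi / n))" .
      moreover have "(2 - s) * pi / n \<in> {0 .. 2 * pi / n}" using s npos
        by (auto simp: divide_simps)
      ultimately show "w i (s, 1) \<in> L j" using bcL[OF jk] by simp
    qed
    have c4: "w i (0, t) = p i \<and> w i (1, t) = ell (\<gamma> i) (\<gamma> j) t" if t: "t \<in> {0..1}" for t
    proof
      have "w i (0,t) = v0 (corner_pt k i)" unfolding w_def
        using t g1 by (simp add: Zf_s0 corner_pt_def bt_def)
      then show "w i (0, t) = p i" using v0bc that \<open>i \<le> k\<close> unfolding disc_bc_def by auto
    next
      show "w i (1, t) = ell (\<gamma> i) (\<gamma> j) t"
      proof (cases "t \<le> 1/2")
        case True
        then show ?thesis unfolding w_def ell_def \<gamma>_def using t by (simp add: Zf_s1a n_def)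
      next
        case False
        have "cis (bt k j + pi / n) = cis (bt k i - pi / n)"
          unfolding j_def bt_next[OF \<open>i \<le> k\<close>, folded n_def] by (simp add: field_simps)
        then show ?thesis unfolding w_def ell_def \<gamma>_def using t False
          by (simp add: Zf_s1b n_def)
      qed
    qed
    show ?thesis unfolding strip_ok_def using c1 c2 c3 c4 j_def by blast
  qed
  have glued: "glued k w g"
    unfolding glued_def w_def
  proof (intro allI impI ballI)
    fix i r u assume "i \<le> k" "r \<in> {0..1::real}" "u \<in> {-1..1::real}"
    then have "\<bar>u\<bar> \<le> 1" "0 \<le> r" "r \<le> 1" by auto
    show "g (complex_of_real r * cis (- 2 * pi * real i / real (Suc k) + u * pi / real (Suc k))) =
          g (Zf k i (fst (glue_s r u, glue_t r u)) (snd (glue_s r u, glue_t r u)))"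
      using glue_Z[OF \<open>\<bar>u\<bar> \<le> 1\<close> \<open>0 \<le> r\<close> \<open>r \<le> 1\<close>] by (simp add: bt_def)
  qed
  have gB: "g \<in> B" unfolding Bdef g_def
    using homotopic_with_trans[OF hom1[OF v0c v0M v0bc] hom2[OF v0c v0M v0bc q(1) q(2) q0]] by simp
  show ?thesis
    using anch strip glued gB unfolding admissible_def by blast
qed

end
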